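(* For every DML query $Q$, the rewriting system $\mathcal{R}^{\mathrm{dml}}_{\Sigma,\mathcal{D}}(Q)$ is terminating (it admits no infinite sequence of one-step rewrites).
   Context: Setting. Order-sorted signature $\Sigma$ with sorts $\mathsf{Fact}$, $\mathsf{Bool}$ interpreted in an algebra $\mathcal{D}$ presented by structural axioms $A$ and confluent terminating equations with Boolean connectives and Boolean-valued equality; ground $\mathsf{Bool}$ terms reduce to $\mathsf{true}$/$\mathsf{false}$. Multisets of facts: associative commutative $\circ$ with identity $\emptyset$. Nominal sorts $s$ have values $\iota^s_n$ ($n\in\mathbb{N}$); for each nominal sort a fresh-fact constructor $C_s$; multisets of fresh facts are built analogously; $\upsilon(C_{s_1}(\iota^{s_1}_{m_1})\circ\cdots\circ C_{s_n}(\iota^{s_n}_{m_n}))=C_{s_1}(\iota^{s_1}_{m_1+1})\circ\cdots\circ C_{s_n}(\iota^{s_n}_{m_n+1})$. Patterns: $\circ$-combinations of groups $[F]_!$ (keep), $[F]_?$ (retain), $[F]_0$ (delete) with $F$ non-empty multisets of (possibly non-ground) facts, and $[G]_\star$ with $G$ a non-empty multiset of fresh facts (possibly with variables); $P_!,P_?,P_0,P_\star$ denote the respective wrapped multisets (empty if absent). $P$ is terminating if $P_?\neq\emptyset$, semi-terminating if $P_?\circ P_0\neq\emptyset$, terminating and preserving if $P_?\neq\emptyset$ and $P_0=P_\star=\emptyset$. Conditions: $\mathrm{False}$, $\{B\}$, $\neg\psi$, $\psi_1\vee\psi_2$, $\exists P.\psi$ ($P$ terminating and preserving). Condition-evaluation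 stacks and rules ("$X\mapsto Y$" meaning $\{F,S\,X\}^c\to\{F,S\,Y\}^c$, $F$ the current database, $\sigma=\{\vec a/\vec v\}$): $[\vec a]_{\mathrm{False}}\mapsto\mathrm{Res}(\mathsf{false})$; $[\vec a]_{\{B\}}\mapsto\mathrm{Res}(\sigma(B))$; $[\vec a]_{\neg\psi}\mapsto\mathrm{Not}[\vec a]_\psi$; $\mathrm{Not}\,\mathrm{Res}(B)\mapsto\mathrm{Res}(\neg B)$; $[\vec a]_{\psi_1\vee\psi_2}\mapsto[\vec a]^\downarrow_{\psi_1}[\vec a]_{\psi_2}$; $[\vec a]^\downarrow_\psi\mathrm{Res}(\mathsf{true})\mapsto\mathrm{Res}(\mathsf{true})$; $[\vec a]^\downarrow_\psi\mathrm{Res}(\mathsf{false})\mapsto[\vec a]_\psi$; $[\vec a]_{\exists P.\psi}\mapsto[F\mid\vec a]_{\exists P.\psi}$; if $\vec w$ lists the variables of $P$ not in $\vec v$, $\sigma'=\{\vec a/\vec v,\vec b/\vec w\}$, $F'=F''\circ\sigma'(P_!\circ P_?)$: $[F'\mid\vec a]_{\exists P.\psi}\mapsto[F''\circ\sigma'(P_!)\mid\vec a]_{\exists P.\psi}[\vec a,\vec b]^{\vec v,\vec w}_\psi$; $[F'\mid\vec a]_{\exists P.\psi}\mathrm{Res}(\mathsf{false})\mapsto[F'\mid\vec a]_{\exists P.\psi}$; $[F'\mid\vec a]_{\exists P.\psi}\mathrm{Res}(\mathsf{true})\mapsto\mathrm{Res}(\mathsf{true})$; if no matching exists, $[F'\mid\vec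 a]_{\exists P.\psi}\mapsto\mathrm{Res}(\mathsf{false})$. DML queries: $\emptyset$, $\mathrm{ok}$, facts $f$, $D\oplus D'$, $\varphi\Rightarrow D$, $\mathrm{From}\,P.D$ with $P$ terminating, and $\mathrm{From}\,P.D$ with $P$ semi-terminating and $D$ success assured (success-assured: $\mathrm{ok}$, a fact, or $D_1\oplus D_2$ with $D_1$ or $D_2$ success assured). Quantifiers bind the variables of $P$ not bound by the context. $\mathcal{R}^{\mathrm{dml}}_{\Sigma,\mathcal{D}}(Q)$: states $\{F,F',F_\star,S\}^d$ ($F$ current database, $F'$ facts to be added, $F_\star$ fresh facts, $S$ stack, top at right), terminal $\mathrm{New}(G,G_\star)$ and $\mathrm{Fail}(G,G_\star)$. Frames, for subqueries $R$ of $Q$: $\mathrm{Ok}$; $[\vec a]^{\vec v}_R$; $[\vec a]^{\vec v,\downarrow}_R$; $[\vec a\mid S']^{\vec v}_R$ ($S'$ a condition stack); iterator frames $[H\mid\vec a\mid B]^{\vec v}_{\mathrm{From}\,P.R}$ and tentative frames $[H\mid\vec a\mid B,F_0]^{\vec v}_{\mathrm{From}\,P.R}$ ($B$ Boolean). With "$X\mapsto Y$" meaning $\{F,F',F_\star,S\,X\}^d\to\{F,F',F_\star,S\,Y\}^d$: $\mathrm{Ok}\,\mathrm{Ok}\mapsto\mathrm{Ok}$; $[\vec a]_{\mathrm{ok}}\mapsto\mathrm{Ok}$; $[\vec a]_\emptyset\mapsto$ (nothing); $\{F,F',F_\star,S[\vec a]_f\}^d\to\{F,F'\circ\sigma(f),F_\star,S\,\mathrm{Ok}\}^d$;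 $[\vec a]_{R_1\oplus R_2}\mapsto[\vec a]^\downarrow_{R_2}[\vec a]_{R_1}$; $[\vec a]^\downarrow_{R_2}\mathrm{Ok}\mapsto\mathrm{Ok}[\vec a]_{R_2}$; $[\vec a]^\downarrow_{R_2}\mapsto[\vec a]_{R_2}$ (when it is the top frame); $[\vec a]_{\varphi\Rightarrow R}\mapsto[\vec a\mid[\vec a]^{\vec v}_\varphi]_R$; $[\vec a\mid\mathrm{Res}(\mathsf{false})]_R\mapsto$ (nothing); $[\vec a\mid\mathrm{Res}(\mathsf{true})]_R\mapsto[\vec a]_R$; for each condition rule $\{F,S'\}^c\to\{F,S''\}^c$, $[\vec a\mid S']_R\mapsto[\vec a\mid S'']_R$; $[\vec a]_{\mathrm{From}\,P.R}\mapsto[F\mid\vec a\mid\mathsf{false}]_{\mathrm{From}\,P.R}$; if $\vec w$ lists the variables of $P$ not in $\vec v$, $\sigma'=\{\vec a/\vec v,\vec b/\vec w\}$, $F=G\circ\sigma'(P_!\circ P_?\circ P_0)$, $H=H'\circ\sigma'(P_!\circ P_?\circ P_0)$ and $F_\star=K\circ\sigma'(P_\star)$, then $\{F,F',F_\star,S[H\mid\vec a\mid B]_{\mathrm{From}\,P.R}\}^d\to\{G\circ\sigma'(P_!\circ P_?),F',K\circ\upsilon(\sigma'(P_\star)),S[H'\circ\sigma'(P_!)\mid\vec a\mid B,\sigma'(P_0)]_{\mathrm{From}\,P.R}[\vec a,\vec b]^{\vec v,\vec w}_R\}^d$; $\{F,F',F_\star,S[H\mid\vec a\mid B,F_0]_{\mathrm{From}\,P.R}\}^d\to\{F\circ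 F_0,F',F_\star,S[H\circ F_0\mid\vec a\mid B]_{\mathrm{From}\,P.R}\}^d$; $[H\mid\vec a\mid B,F_0]_{\mathrm{From}\,P.R}\mathrm{Ok}\mapsto[H\mid\vec a\mid\mathsf{true}]_{\mathrm{From}\,P.R}$; if $H$ does not match $H'\circ\sigma'(P_!\circ P_?\circ P_0)$ for any $H',\vec b$, then $[H\mid\vec a\mid B]_{\mathrm{From}\,P.R}\mapsto\delta(B)$ with $\delta(\mathsf{true})=\mathrm{Ok}$, $\delta(\mathsf{false})=$ nothing; $\{F,F',F_\star,\mathrm{Ok}\}^d\to\mathrm{New}(F\circ F',F_\star)$; $\{F,F',F_\star,\text{empty}\}^d\to\mathrm{Fail}(F\circ F',F_\star)$. *)

theory Defs
  imports Main "HOL-Library.Multiset"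
begin

text \<open>
  Type parameters:
   'x  : variables;   'v : values (elements of the algebra D);
   'pf : (possibly non-ground) facts, as they occur in patterns/queries;
   'f  : ground facts (elements of sort Fact of D, i.e. modulo the equations);
   'pg : fresh-fact patterns C_s(t);  's : nominal sorts;
   'b  : Bool-sorted terms (possibly with variables).
  A ground fresh fact C_s(iota^s_n) is represented by the pair (s, n).
  A substitution {a/v} is a partial map env :: 'x \<rightharpoonup> 'v with domain the list v.
  The signature-dependent operations are parameters:
   inst e f   : sigma(f) for a fact f,
   instG e g  : sigma(g) for a fresh-fact pattern g,
   evalB e B  : the value (true/false) of the ground Bool term sigma(B),
   fvars f / gvars g : the variables occurring in f / g.
\<close>

type_synonym ('x,'v) env = "'x \<rightharpoonup> 'v"

text \<open>A pattern, given by its four wrapped multisets P_!, P_?, P_0, P_star.\<close>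
datatype ('pf,'pg) pattern =
  Pat (pkeep: "'pf multiset") (pret: "'pf multiset") (pdel: "'pf multiset") (pfresh: "'pg multiset")

definition terminating_pat :: "('pf,'pg) pattern \<Rightarrow> bool" where
  "terminating_pat P \<longleftrightarrow> pret P \<noteq> {#}"

definition semi_terminating_pat :: "('pf,'pg) pattern \<Rightarrow> bool" where
  "semi_terminating_pat P \<longleftrightarrow> pret P + pdel P \<noteq> {#}"

definition term_pres_pat :: "('pf,'pg) pattern \<Rightarrow> bool" where
  "term_pres_pat P \<longleftrightarrow> pret P \<noteq> {#} \<and> pdel P = {#} \<and> pfresh P = {#}"

definition pat_vars :: "('pf \<Rightarrow> 'x set) \<Rightarrow> ('pg \<Rightarrow> 'x set) \<Rightarrow> ('pf,'pg) pattern \<Rightarrow> 'x set" where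
  "pat_vars fvars gvars P =
     (\<Union>f\<in>set_mset (pkeep P + pret P + pdel P). fvars f) \<union> (\<Union>g\<in>set_mset (pfresh P). gvars g)"

text \<open>sigma' = {a/v, b/w} where w lists the variables of P not in v:
  e' extends e exactly by bindings for the variables of P not bound by e.\<close>
definition ext_env :: "('pf \<Rightarrow> 'x set) \<Rightarrow> ('pg \<Rightarrow> 'x set) \<Rightarrow> ('pf,'pg) pattern
                        \<Rightarrow> ('x,'v) env \<Rightarrow> ('x,'v) env \<Rightarrow> bool" where
  "ext_env fvars gvars P e e' \<longleftrightarrow>
     dom e' = dom e \<union> pat_vars fvars gvars P \<and> (\<forall>x\<in>dom e. e' x = e x)"

definition upsilon :: "('s \<times> nat) multiset \<Rightarrow> ('s \<times> nat) multiset" where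
  "upsilon G = image_mset (\<lambda>(s,n). (s, Suc n)) G"

datatype ('b,'pf,'pg) cond =
    CFalse
  | CBool 'b
  | CNot "('b,'pf,'pg) cond"
  | COr "('b,'pf,'pg) cond" "('b,'pf,'pg) cond"
  | CEx "('pf,'pg) pattern" "('b,'pf,'pg) cond"

fun wf_cond :: "('b,'pf,'pg) cond \<Rightarrow> bool" where
  "wf_cond CFalse = True"
| "wf_cond (CBool B) = True"
| "wf_cond (CNot \<psi>) = wf_cond \<psi>"
| "wf_cond (COr \<psi>1 \<psi>2) = (wf_cond \<psi>1 \<and> wf_cond \<psi>2)"
| "wf_cond (CEx P \<psi>) = (term_pres_pat P \<and> wf_cond \<psi>)"

datatype ('b,'pf,'pg) dml =
    DEmpty
  | DOk
  | DFact 'pf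
  | DPlus "('b,'pf,'pg) dml" "('b,'pf,'pg) dml"
  | DImp "('b,'pf,'pg) cond" "('b,'pf,'pg) dml"
  | DFrom "('pf,'pg) pattern" "('b,'pf,'pg) dml"

fun success_assured :: "('b,'pf,'pg) dml \<Rightarrow> bool" where
  "success_assured DOk = True"
| "success_assured (DFact f) = True"
| "success_assured (DPlus D1 D2) = (success_assured D1 \<or> success_assured D2)"
| "success_assured _ = False"

fun wf_dml :: "('b,'pf,'pg) dml \<Rightarrow> bool" where
  "wf_dml DEmpty = True"
| "wf_dml DOk = True"
| "wf_dml (DFact f) = True"
| "wf_dml (DPlus D1 D2) = (wf_dml D1 \<and> wf_dml D2)"
| "wf_dml (DImp \<phi> D) = (wf_cond \<phi> \<and> wf_dml D)"
| "wf_dml (DFrom P D) = (wf_dml D \<and>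
      (terminating_pat P \<or> (semi_terminating_pat P \<and> success_assured D)))"

fun subconds :: "('b,'pf,'pg) cond \<Rightarrow> ('b,'pf,'pg) cond set" where
  "subconds CFalse = {CFalse}"
| "subconds (CBool B) = {CBool B}"
| "subconds (CNot \<psi>) = insert (CNot \<psi>) (subconds \<psi>)"
| "subconds (COr \<psi>1 \<psi>2) = insert (COr \<psi>1 \<psi>2) (subconds \<psi>1 \<union> subconds \<psi>2)"
| "subconds (CEx P \<psi>) = insert (CEx P \<psi>) (subconds \<psi>)"

fun subqs :: "('b,'pf,'pg) dml \<Rightarrow> ('b,'pf,'pg) dml set" where
  "subqs DEmpty = {DEmpty}"
| "subqs DOk = {DOk}"
| "subqs (DFact f) = {DFact f}"
| "subqs (DPlus D1 D2) = insert (DPlus D1 D2) (subqs D1 \<union> subqs D2)"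
| "subqs (DImp \<phi> D) = insert (DImp \<phi> D) (subqs D)"
| "subqs (DFrom P D) = insert (DFrom P D) (subqs D)"

fun qconds :: "('b,'pf,'pg) dml \<Rightarrow> ('b,'pf,'pg) cond set" where
  "qconds (DPlus D1 D2) = qconds D1 \<union> qconds D2"
| "qconds (DImp \<phi> D) = subconds \<phi> \<union> qconds D"
| "qconds (DFrom P D) = qconds D"
| "qconds _ = {}"

datatype ('x,'v,'f,'b,'pf,'pg) cframe =
    CEval "('x,'v) env" "('b,'pf,'pg) cond"
  | CNotF
  | COrF "('x,'v) env" "('b,'pf,'pg) cond"
  | CRes bool
  | CExF "'f multiset" "('x,'v) env" "('pf,'pg) pattern" "('b,'pf,'pg) cond"

text \<open>Stacks are lists, top at the right; a rule X \<mapsto> Y rewrites S X to S Y.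
  F is the current database.\<close>
inductive cstep ::
  "(('x,'v) env \<Rightarrow> 'pf \<Rightarrow> 'f) \<Rightarrow> ('pf \<Rightarrow> 'x set) \<Rightarrow> ('pg \<Rightarrow> 'x set) \<Rightarrow> (('x,'v) env \<Rightarrow> 'b \<Rightarrow> bool)
   \<Rightarrow> 'f multiset \<Rightarrow> ('x,'v,'f,'b,'pf,'pg) cframe list \<Rightarrow> ('x,'v,'f,'b,'pf,'pg) cframe list \<Rightarrow> bool"
  for inst fvars gvars evalB F where
  c_false: "cstep inst fvars gvars evalB F (S @ [CEval e CFalse]) (S @ [CRes False])"
| c_bool: "cstep inst fvars gvars evalB F (S @ [CEval e (CBool B)]) (S @ [CRes (evalB e B)])"
| c_not: "cstep inst fvars gvars evalB F (S @ [CEval e (CNot \<psi>)]) (S @ [CNotF, CEval e \<psi>])"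
| c_notres: "cstep inst fvars gvars evalB F (S @ [CNotF, CRes b]) (S @ [CRes (\<not> b)])"
| c_or: "cstep inst fvars gvars evalB F (S @ [CEval e (COr \<psi>1 \<psi>2)]) (S @ [COrF e \<psi>1, CEval e \<psi>2])"
| c_or_true: "cstep inst fvars gvars evalB F (S @ [COrF e \<psi>, CRes True]) (S @ [CRes True])"
| c_or_false: "cstep inst fvars gvars evalB F (S @ [COrF e \<psi>, CRes False]) (S @ [CEval e \<psi>])"
| c_ex: "cstep inst fvars gvars evalB F (S @ [CEval e (CEx P \<psi>)]) (S @ [CExF F e P \<psi>])"
| c_ex_match: "\<lbrakk> ext_env fvars gvars P e e';
                 F' = F'' + image_mset (inst e') (pkeep P + pret P) \<rbrakk> \<Longrightarrow>
     cstep inst fvars gvars evalB F (S @ [CExF F' e P \<psi>])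
        (S @ [CExF (F'' + image_mset (inst e') (pkeep P)) e P \<psi>, CEval e' \<psi>])"
| c_ex_false: "cstep inst fvars gvars evalB F (S @ [CExF F' e P \<psi>, CRes False]) (S @ [CExF F' e P \<psi>])"
| c_ex_true: "cstep inst fvars gvars evalB F (S @ [CExF F' e P \<psi>, CRes True]) (S @ [CRes True])"
| c_ex_none: "\<not> (\<exists>e' F''. ext_env fvars gvars P e e' \<and>
                   F' = F'' + image_mset (inst e') (pkeep P + pret P)) \<Longrightarrow>
     cstep inst fvars gvars evalB F (S @ [CExF F' e P \<psi>]) (S @ [CRes False])"

datatype ('x,'v,'f,'b,'pf,'pg) dframe =
    DOkF
  | DEval "('x,'v) env" "('b,'pf,'pg) dml"
  | DPlusF "('x,'v) env" "('b,'pf,'pg) dml"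
  | DCond "('x,'v) env" "('x,'v,'f,'b,'pf,'pg) cframe list" "('b,'pf,'pg) dml"
  | DIter "'f multiset" "('x,'v) env" bool "('pf,'pg) pattern" "('b,'pf,'pg) dml"
  | DTent "'f multiset" "('x,'v) env" bool "'f multiset" "('pf,'pg) pattern" "('b,'pf,'pg) dml"

datatype ('x,'v,'f,'b,'pf,'pg,'s) dstate =
    DSt "'f multiset" "'f multiset" "('s \<times> nat) multiset" "('x,'v,'f,'b,'pf,'pg) dframe list"
  | New "'f multiset" "('s \<times> nat) multiset"
  | Fail "'f multiset" "('s \<times> nat) multiset"

inductive dstep ::
  "(('x,'v) env \<Rightarrow> 'pf \<Rightarrow> 'f) \<Rightarrow> (('x,'v) env \<Rightarrow> 'pg \<Rightarrow> 's \<times> nat)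
   \<Rightarrow> ('pf \<Rightarrow> 'x set) \<Rightarrow> ('pg \<Rightarrow> 'x set) \<Rightarrow> (('x,'v) env \<Rightarrow> 'b \<Rightarrow> bool)
   \<Rightarrow> ('x,'v,'f,'b,'pf,'pg,'s) dstate \<Rightarrow> ('x,'v,'f,'b,'pf,'pg,'s) dstate \<Rightarrow> bool"
  for inst instG fvars gvars evalB where
  d_okok: "dstep inst instG fvars gvars evalB (DSt F F' Fs (S @ [DOkF, DOkF])) (DSt F F' Fs (S @ [DOkF]))"
| d_ok: "dstep inst instG fvars gvars evalB (DSt F F' Fs (S @ [DEval e DOk])) (DSt F F' Fs (S @ [DOkF]))"
| d_empty: "dstep inst instG fvars gvars evalB (DSt F F' Fs (S @ [DEval e DEmpty])) (DSt F F' Fs S)"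
| d_fact: "dstep inst instG fvars gvars evalB (DSt F F' Fs (S @ [DEval e (DFact f)]))
             (DSt F (F' + {# inst e f #}) Fs (S @ [DOkF]))"
| d_plus: "dstep inst instG fvars gvars evalB (DSt F F' Fs (S @ [DEval e (DPlus R1 R2)]))
             (DSt F F' Fs (S @ [DPlusF e R2, DEval e R1]))"
| d_plus_ok: "dstep inst instG fvars gvars evalB (DSt F F' Fs (S @ [DPlusF e R2, DOkF]))
             (DSt F F' Fs (S @ [DOkF, DEval e R2]))"
| d_plus_top: "dstep inst instG fvars gvars evalB (DSt F F' Fs (S @ [DPlusF e R2]))
             (DSt F F' Fs (S @ [DEval e R2]))"
| d_imp: "dstep inst instG fvars gvars evalB (DSt F F' Fs (S @ [DEval e (DImp \<phi> R)]))
             (DSt F F' Fs (S @ [DCond e [CEval e \<phi>] R]))"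
| d_cond_false: "dstep inst instG fvars gvars evalB (DSt F F' Fs (S @ [DCond e [CRes False] R]))
             (DSt F F' Fs S)"
| d_cond_true: "dstep inst instG fvars gvars evalB (DSt F F' Fs (S @ [DCond e [CRes True] R]))
             (DSt F F' Fs (S @ [DEval e R]))"
| d_cond_step: "cstep inst fvars gvars evalB F S' S'' \<Longrightarrow>
     dstep inst instG fvars gvars evalB (DSt F F' Fs (S @ [DCond e S' R]))
             (DSt F F' Fs (S @ [DCond e S'' R]))"
| d_from: "dstep inst instG fvars gvars evalB (DSt F F' Fs (S @ [DEval e (DFrom P R)]))
             (DSt F F' Fs (S @ [DIter F e False P R]))"
| d_iter_match: "\<lbrakk> ext_env fvars gvars P e e';
      F = G + image_mset (inst e') (pkeep P + pret P + pdel P);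
      H = H' + image_mset (inst e') (pkeep P + pret P + pdel P);
      Fs = K + image_mset (instG e') (pfresh P) \<rbrakk> \<Longrightarrow>
     dstep inst instG fvars gvars evalB (DSt F F' Fs (S @ [DIter H e B P R]))
       (DSt (G + image_mset (inst e') (pkeep P + pret P)) F'
            (K + upsilon (image_mset (instG e') (pfresh P)))
            (S @ [DTent (H' + image_mset (inst e') (pkeep P)) e B (image_mset (inst e') (pdel P)) P R,
                  DEval e' R]))"
| d_tent_restore: "dstep inst instG fvars gvars evalB (DSt F F' Fs (S @ [DTent H e B F0 P R]))
       (DSt (F + F0) F' Fs (S @ [DIter (H + F0) e B P R]))"
| d_tent_ok: "dstep inst instG fvars gvars evalB (DSt F F' Fs (S @ [DTent H e B F0 P R, DOkF]))
       (DSt F F' Fs (S @ [DIter H e True P R]))"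
| d_iter_done: "\<not> (\<exists>e' H'. ext_env fvars gvars P e e' \<and>
                    H = H' + image_mset (inst e') (pkeep P + pret P + pdel P)) \<Longrightarrow>
     dstep inst instG fvars gvars evalB (DSt F F' Fs (S @ [DIter H e B P R]))
       (DSt F F' Fs (S @ (if B then [DOkF] else [])))"
| d_new: "dstep inst instG fvars gvars evalB (DSt F F' Fs [DOkF]) (New (F + F') Fs)"
| d_fail: "dstep inst instG fvars gvars evalB (DSt F F' Fs []) (Fail (F + F') Fs)"

text \<open>The terms of R^dml(Q): all states whose frames refer to subqueries
  (and subconditions) of Q.\<close>
fun cframe_of :: "('b,'pf,'pg) dml \<Rightarrow> ('x,'v,'f,'b,'pf,'pg) cframe \<Rightarrow> bool" where
  "cframe_of Q (CEval e \<psi>) = (\<psi> \<in> qconds Q)"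
| "cframe_of Q CNotF = True"
| "cframe_of Q (COrF e \<psi>) = (\<psi> \<in> qconds Q)"
| "cframe_of Q (CRes b) = True"
| "cframe_of Q (CExF F e P \<psi>) = (CEx P \<psi> \<in> qconds Q)"

fun dframe_of :: "('b,'pf,'pg) dml \<Rightarrow> ('x,'v,'f,'b,'pf,'pg) dframe \<Rightarrow> bool" where
  "dframe_of Q DOkF = True"
| "dframe_of Q (DEval e R) = (R \<in> subqs Q)"
| "dframe_of Q (DPlusF e R) = (R \<in> subqs Q)"
| "dframe_of Q (DCond e S' R) = (R \<in> subqs Q \<and> (\<forall>c\<in>set S'. cframe_of Q c))"
| "dframe_of Q (DIter H e B P R) = (DFrom P R \<in> subqs Q)"
| "dframe_of Q (DTent H e B F0 P R) = (DFrom P R \<in> subqs Q)"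

fun dstate_of :: "('b,'pf,'pg) dml \<Rightarrow> ('x,'v,'f,'b,'pf,'pg,'s) dstate \<Rightarrow> bool" where
  "dstate_of Q (DSt F F' Fs S) = (\<forall>fr\<in>set S. dframe_of Q fr)"
| "dstate_of Q (New G Gs) = True"
| "dstate_of Q (Fail G Gs) = True"

end

theory Submission
  imports Defs "HOL-Library.Multiset_Order" "HOL-Library.Product_Lexorder"
begin

fun csz :: "('b,'pf,'pg) cond \<Rightarrow> nat" where
  "csz CFalse = 1"
| "csz (CBool B) = 1"
| "csz (CNot \<psi>) = csz \<psi> + 1"
| "csz (COr \<psi>1 \<psi>2) = csz \<psi>1 + csz \<psi>2 + 1"
| "csz (CEx P \<psi>) = csz \<psi> + 1"

fun qsz :: "('b,'pf,'pg) dml \<Rightarrow> nat" where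
  "qsz DEmpty = 1"
| "qsz DOk = 1"
| "qsz (DFact f) = 1"
| "qsz (DPlus D1 D2) = qsz D1 + qsz D2 + 1"
| "qsz (DImp \<phi> D) = qsz D + 1"
| "qsz (DFrom P D) = qsz D + 1"

fun cw :: "('x,'v,'f,'b,'pf,'pg) cframe \<Rightarrow> nat \<times> nat \<times> nat" where
  "cw (CEval e \<psi>) = (csz \<psi>, 1, 0)"
| "cw CNotF = (0,0,0)"
| "cw (COrF e \<psi>) = (csz \<psi>, 2, 0)"
| "cw (CRes b) = (0,0,0)"
| "cw (CExF F e P \<psi>) = (csz \<psi>, 3, size F)"

definition cm :: "('x,'v,'f,'b,'pf,'pg) cframe list \<Rightarrow> (nat \<times> nat \<times> nat) multiset" where
  "cm S = mset (map cw S)"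

fun gfr :: "('x,'v,'f,'b,'pf,'pg) dframe \<Rightarrow> bool" where
  "gfr DOkF = True"
| "gfr (DEval e R) = success_assured R"
| "gfr (DPlusF e R) = success_assured R"
| "gfr (DCond e S R) = False"
| "gfr (DIter H e B P R) = B"
| "gfr (DTent H e B F0 P R) = B"

definition sa :: "('x,'v,'f,'b,'pf,'pg) dframe list \<Rightarrow> bool" where
  "sa T \<longleftrightarrow> (\<exists>f\<in>set T. gfr f)"

type_synonym wt = "nat \<times> nat \<times> nat \<times> (nat \<times> nat \<times> nat) multiset"

fun dw :: "('x,'v,'f,'b,'pf,'pg) dframe \<Rightarrow> ('x,'v,'f,'b,'pf,'pg) dframe list \<Rightarrow> wt" where
  "dw DOkF T = (0,0,0,{#})"
| "dw (DEval e R) T = (qsz R, 0, 0, {#})"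
| "dw (DPlusF e R) T = (qsz R, 1, 0, {#})"
| "dw (DCond e S R) T = (qsz R, 2, 0, cm S)"
| "dw (DIter H e B P R) T = (qsz R, 3, 3 * size H + 1, {#})"
| "dw (DTent H e B F0 P R) T = (qsz R, 3, 3 * (size H + size F0) +
      (if \<not> terminating_pat P \<and> F0 \<noteq> {#} \<and> sa T then 0 else 2), {#})"

fun wl :: "('x,'v,'f,'b,'pf,'pg) dframe list \<Rightarrow> wt multiset" where
  "wl [] = {#}"
| "wl (f # T) = add_mset (dw f T) (wl T)"

fun mu :: "('x,'v,'f,'b,'pf,'pg,'s) dstate \<Rightarrow> wt multiset" where
  "mu (DSt F F' Fs S) = wl S"
| "mu _ = {#}"


lemma subqs_refl: "R \<in> subqs R"
  by (cases R) auto

lemma subqs_trans: "R \<in> subqs Q \<Longrightarrow> subqs R \<subseteq> subqs Q"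
  by (induction Q) auto

lemma subconds_refl: "\<psi> \<in> subconds \<psi>"
  by (cases \<psi>) auto

lemma subconds_trans: "\<psi> \<in> subconds \<phi> \<Longrightarrow> subconds \<psi> \<subseteq> subconds \<phi>"
  by (induction \<phi>) auto

lemma qconds_mono: "R \<in> subqs Q \<Longrightarrow> qconds R \<subseteq> qconds Q"
  by (induction Q) auto

lemma qconds_closed: "\<psi> \<in> qconds Q \<Longrightarrow> subconds \<psi> \<subseteq> qconds Q"
  by (induction Q) (auto dest: subconds_trans)

lemma wf_subqs: "wf_dml Q \<Longrightarrow> R \<in> subqs Q \<Longrightarrow> wf_dml R"
  by (induction Q) auto

lemma wf_subconds: "wf_cond \<phi> \<Longrightarrow> \<psi> \<in> subconds \<phi> \<Longrightarrow> wf_cond \<psi>"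
  by (induction \<phi>) auto

lemma wf_qconds: "wf_dml Q \<Longrightarrow> \<psi> \<in> qconds Q \<Longrightarrow> wf_cond \<psi>"
  by (induction Q) (auto dest: wf_subconds)

lemma cm_app: "cm (S @ X) = cm S + cm X"
  by (simp add: cm_def)

lemma cstep_dec:
  assumes "cstep inst fvars gvars evalB F S1 S2" "\<forall>c\<in>set S1. cframe_of Q c" "wf_dml Q"
  shows "cm S2 < cm S1 \<and> (\<forall>c\<in>set S2. cframe_of Q c)"
  using assms(1)
proof (cases rule: cstep.cases)
  case (c_ex_match P e e' F' F'' S \<psi>)
  have ex: "CEx P \<psi> \<in> qconds Q" using assms(2) c_ex_match by auto
  then have tp: "term_pres_pat P" using wf_qconds[OF assms(3)] by fastforce
  then have "pret P \<noteq> {#}" by (simp add: term_pres_pat_def)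
  then have sz: "size (F'' + image_mset (inst e') (pkeep P)) < size F'"
    using c_ex_match by (simp add: nonempty_has_size)
  have "\<psi> \<in> subconds (CEx P \<psi>)" by (simp add: subconds_refl)
  then have "\<psi> \<in> qconds Q" using qconds_closed[OF ex] by blast
  moreover have "cm S2 < cm S1" using sz c_ex_match
    by (simp add: cm_app cm_def)
  ultimately show ?thesis using c_ex_match assms(2) by auto
next
  case (c_not S e \<psi>)
  have ex: "CNot \<psi> \<in> qconds Q" using assms(2) c_not by auto
  have "\<psi> \<in> subconds (CNot \<psi>)" by (simp add: subconds_refl)
  then have "\<psi> \<in> qconds Q" using qconds_closed[OF ex] by blast
  then show ?thesis using c_not assms(2) by (simp add: cm_app cm_def)
next
  case (c_or S e \<psi>1 \<psi>2)
  have ex: "COr \<psi>1 \<psi>2 \<in> qconds Q" using assms(2) c_or by auto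
  have "\<psi>1 \<in> subconds (COr \<psi>1 \<psi>2)" "\<psi>2 \<in> subconds (COr \<psi>1 \<psi>2)" by (simp_all add: subconds_refl)
  then have "\<psi>1 \<in> qconds Q" "\<psi>2 \<in> qconds Q" using qconds_closed[OF ex] by blast+
  then show ?thesis using c_or assms(2) by (simp add: cm_app cm_def)
next
  case (c_ex S e P \<psi>)
  then show ?thesis using assms(2) by (simp add: cm_app cm_def)
next
  case (c_false S e)
  then show ?thesis using assms(2) by (simp add: cm_app cm_def)
next
  case (c_bool S e B)
  then show ?thesis using assms(2) by (simp add: cm_app cm_def)
next
  case (c_notres S b)
  then show ?thesis using assms(2) by (simp add: cm_app cm_def le_multiset_right_total)
next
  case (c_or_true S e \<psi>)
  then show ?thesis using assms(2) by (simp add: cm_app cm_def)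
next
  case (c_or_false S e \<psi>)
  have "{#(csz \<psi>, Suc 0, 0)#} < add_mset (0,0,0) {#(csz \<psi>, 2, 0::nat)#}"
    by (rule less_trans[OF _ le_multiset_right_total]) simp
  then show ?thesis using c_or_false assms(2) by (simp add: cm_app cm_def)
next
  case (c_ex_false S F' e P \<psi>)
  then show ?thesis using assms(2) by (simp add: cm_app cm_def le_multiset_right_total)
next
  case (c_ex_true S F' e P \<psi>)
  then show ?thesis using assms(2) by (simp add: cm_app cm_def)
next
  case (c_ex_none P e F' S \<psi>)
  then show ?thesis using assms(2) by (simp add: cm_app cm_def)
qed

lemma dw_mono: "(sa T \<Longrightarrow> sa T') \<Longrightarrow> dw f T' \<le> dw f T"
  by (cases f) auto

lemma wl_app:
  assumes "wl Y < wl X" "sa X \<Longrightarrow> sa Y"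
  shows "wl (S @ Y) < wl (S @ X)"
  using assms
proof (induction S)
  case Nil then show ?case by simp
next
  case (Cons f S)
  have "sa (S @ X) \<Longrightarrow> sa (S @ Y)" using Cons.prems(2) by (auto simp: sa_def)
  then have "dw f (S @ Y) \<le> dw f (S @ X)" by (rule dw_mono)
  then show ?case using Cons by (simp add: add_mset_lt_le_lt)
qed

lemma dstep_inv:
  assumes "dstep inst instG fvars gvars evalB s t" "dstate_of Q s" "wf_dml Q"
  shows "dstate_of Q t"
  using assms(1)
proof (cases rule: dstep.cases)
  case (d_plus F F' Fs S e R1 R2)
  then have "DPlus R1 R2 \<in> subqs Q" using assms(2) by auto
  then have "R1 \<in> subqs Q" "R2 \<in> subqs Q" using subqs_trans subqs_refl by fastforce+
  then show ?thesis using d_plus assms(2) by auto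
next
  case (d_imp F F' Fs S e \<phi> R)
  then have i: "DImp \<phi> R \<in> subqs Q" using assms(2) by auto
  then have "R \<in> subqs Q" using subqs_trans subqs_refl by fastforce
  moreover have "\<phi> \<in> qconds Q" using qconds_mono[OF i] subconds_refl by fastforce
  ultimately show ?thesis using d_imp assms(2) by auto
next
  case (d_cond_step F S' S'' F' Fs S e R)
  then show ?thesis using assms(2,3) cstep_dec[OF d_cond_step(3), of Q] by auto
next
  case (d_iter_match P e e' F G H H' Fs K F' S B R)
  then have i: "DFrom P R \<in> subqs Q" using assms(2) by auto
  then have "R \<in> subqs Q" using subqs_trans subqs_refl by fastforce
  then show ?thesis using d_iter_match assms(2) by auto
qed (use assms(2) in auto)

lemma dstep_dec:
  assumes "dstep inst instG fvars gvars evalB s t" "dstate_of Q s" "wf_dml Q"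
    and "t = DSt a b c d"
  shows "mu t < mu s"
  using assms(1)
proof (cases rule: dstep.cases)
  case (d_okok F F' Fs S)
  have "wl [DOkF] < wl [DOkF, DOkF]" by (simp add: le_multiset_right_total)
  then show ?thesis using d_okok by simp (intro wl_app, auto simp: sa_def)
next
  case (d_ok F F' Fs S e)
  then show ?thesis by simp (intro wl_app, auto simp: sa_def)
next
  case (d_empty F F' Fs S e)
  then show ?thesis using wl_app[of "[]" "[DEval e DEmpty]" S] by (simp add: sa_def)
next
  case (d_fact F F' Fs S e f)
  then show ?thesis by simp (intro wl_app, auto simp: sa_def)
next
  case (d_plus F F' Fs S e R1 R2)
  then show ?thesis by simp (intro wl_app, auto simp: sa_def)
next
  case (d_plus_ok F F' Fs S e R2)
  have "wl [DOkF, DEval e R2] < wl [DPlusF e R2, DOkF]"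
    by (simp add: add_mset_commute[of "(0,0,0,{#})"] add_mset_lt_right_lt)
  then show ?thesis using d_plus_ok by simp (intro wl_app, auto simp: sa_def)
next
  case (d_plus_top F F' Fs S e R2)
  then show ?thesis by simp (intro wl_app, auto simp: sa_def)
next
  case (d_imp F F' Fs S e \<phi> R)
  then show ?thesis by simp (intro wl_app, auto simp: sa_def)
next
  case (d_cond_false F F' Fs S e R)
  then show ?thesis using wl_app[of "[]" "[DCond e [CRes False] R]" S] by (simp add: sa_def)
next
  case (d_cond_true F F' Fs S e R)
  then show ?thesis by simp (intro wl_app, auto simp: sa_def)
next
  case (d_cond_step F S' S'' F' Fs S e R)
  have "cm S'' < cm S'" using assms(2,3) cstep_dec[OF d_cond_step(3), of Q] d_cond_step by auto
  then show ?thesis using d_cond_step by simp (intro wl_app, auto simp: sa_def)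
next
  case (d_from F F' Fs S e P R)
  then show ?thesis by simp (intro wl_app, auto simp: sa_def)
next
  case (d_iter_match P e e' F G H H' Fs K F' S B R)
  then have i: "DFrom P R \<in> subqs Q" using assms(2) by auto
  then have wfR: "wf_dml (DFrom P R)" using wf_subqs assms(3) by blast
  define n where "n = size (H' + image_mset (inst e') (pkeep P)) + size (image_mset (inst e') (pdel P))"
  have hs: "size H = n + size (pret P)" using d_iter_match by (simp add: n_def)
  define fl where "fl = (if \<not> terminating_pat P \<and> image_mset (inst e') (pdel P) \<noteq> {#}
        \<and> sa [DEval e' R] then 0 else (2::nat))"
  have "3 * n + fl < 3 * size H + 1"
  proof (cases "terminating_pat P")
    case True
    then have "size (pret P) > 0" by (simp add: terminating_pat_def nonempty_has_size)
    then show ?thesis using hs by (simp add: fl_def)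
  next
    case False
    then have "success_assured R" "pdel P \<noteq> {#}" "pret P = {#}" using wfR
      by (auto simp: semi_terminating_pat_def terminating_pat_def)
    then show ?thesis using hs False by (simp add: fl_def sa_def)
  qed
  then have "wl [DTent (H' + image_mset (inst e') (pkeep P)) e B (image_mset (inst e') (pdel P)) P R,
                  DEval e' R] < wl [DIter H e B P R]"
    by (auto simp: n_def fl_def sa_def split: if_splits)
  then show ?thesis using d_iter_match by simp (intro wl_app, auto simp: sa_def)
next
  case (d_tent_restore F F' Fs S H e B F0 P R)
  then show ?thesis by simp (intro wl_app, auto simp: sa_def)
next
  case (d_tent_ok F F' Fs S H e B F0 P R)
  have "wl [DIter H e True P R] < wl [DTent H e B F0 P R, DOkF]"
  proof -
    have "dw (DIter H e True P R) [] < dw (DTent H e B F0 P R) [DOkF]"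
      by (cases "F0 = {#}") (auto simp: nonempty_has_size)
    then show ?thesis by (simp add: add_mset_lt_lt_le)
  qed
  then show ?thesis using d_tent_ok by simp (intro wl_app, auto simp: sa_def)
next
  case (d_iter_done P e H F F' Fs S B R)
  show ?thesis
  proof (cases B)
    case True
    then show ?thesis using d_iter_done by simp (intro wl_app, auto simp: sa_def)
  next
    case False
    then show ?thesis using d_iter_done wl_app[of "[]" "[DIter H e B P R]" S] by (simp add: sa_def)
  qed
qed (use assms(4) in auto)

lemma no_step_New: "\<not> dstep inst instG fvars gvars evalB (New G Gs) t"
  by (auto elim: dstep.cases)

lemma no_step_Fail: "\<not> dstep inst instG fvars gvars evalB (Fail G Gs) t"
  by (auto elim: dstep.cases)

theorem theorem6:
  fixes Q :: "('b,'pf,'pg) dml"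
    and inst :: "('x,'v) env \<Rightarrow> 'pf \<Rightarrow> 'f"
    and instG :: "('x,'v) env \<Rightarrow> 'pg \<Rightarrow> 's \<times> nat"
    and fvars :: "'pf \<Rightarrow> 'x set" and gvars :: "'pg \<Rightarrow> 'x set"
    and evalB :: "('x,'v) env \<Rightarrow> 'b \<Rightarrow> bool"
  assumes "wf_dml Q"
  shows "\<not> (\<exists>seq :: nat \<Rightarrow> ('x,'v,'f,'b,'pf,'pg,'s) dstate.
              dstate_of Q (seq 0) \<and>
              (\<forall>i. dstep inst instG fvars gvars evalB (seq i) (seq (Suc i))))"
proof
  assume "\<exists>seq :: nat \<Rightarrow> ('x,'v,'f,'b,'pf,'pg,'s) dstate.
              dstate_of Q (seq 0) \<and>
              (\<forall>i. dstep inst instG fvars gvars evalB (seq i) (seq (Suc i)))"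
  then obtain seq :: "nat \<Rightarrow> ('x,'v,'f,'b,'pf,'pg,'s) dstate" where
    s0: "dstate_of Q (seq 0)" and st: "\<And>i. dstep inst instG fvars gvars evalB (seq i) (seq (Suc i))"
    by blast
  have inv: "dstate_of Q (seq i)" for i
    by (induction i) (use s0 dstep_inv[OF st _ assms] in auto)
  have isd: "\<exists>a b c d. seq i = DSt a b c d" for i
  proof (cases "seq i")
    case (New G Gs) then show ?thesis using st[of i] no_step_New by metis
  next
    case (Fail G Gs) then show ?thesis using st[of i] no_step_Fail by metis
  qed auto
  have dec: "mu (seq (Suc i)) < mu (seq i)" for i
    using isd[of "Suc i"] dstep_dec[OF st inv assms] by blast
  have "\<forall>i. mu (seq i) \<noteq> M" for M :: "wt multiset"
  proof (induction M rule: less_induct)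
    case (less M)
    show ?case
    proof (intro allI notI)
      fix i assume "mu (seq i) = M"
      then have "mu (seq (Suc i)) < M" using dec by metis
      then show False using less by blast
    qed
  qed
  then show False by blast
qed

end
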